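(* Let $X$ be a real reflexive Banach space and let $F \subset X$ be a convex existence set. For $v \in F$ and $t > 0$ put $F_t = (1-t)v + tF$, and let $C_v = \mathrm{cl}\left(\bigcup_{t>0} F_t\right)$. Then $C_v$ is an existence set.
   Context: For a non-empty set $F \subset X$ and $x \in X$, let $R_F(x) = \{ d \in F : \|d-c\| \le \|x-c\| \text{ for all } c \in F\}$. A non-empty set $F \subset X$ is an existence set if $R_F(x) \neq \emptyset$ for every $x \in X$. $\mathrm{cl}$ denotes norm closure. *)

theory Defs
  imports "HOL-Analysis.Analysis"
begin

definition reflexive_space :: "'a::real_normed_vector itself \<Rightarrow> bool" where
  "reflexive_space TYPE('a) \<longleftrightarrow>
     (\<forall>\<Phi> :: ('a \<Rightarrow>\<^sub>L real) \<Rightarrow>\<^sub>L real. \<exists>x::'a. \<forall>f. blinfun_apply \<Phi> f = blinfun_apply f x)"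

definition R_set :: "'a::real_normed_vector set \<Rightarrow> 'a \<Rightarrow> 'a set" where
  "R_set F x = {d \<in> F. \<forall>c\<in>F. norm (d - c) \<le> norm (x - c)}"

definition existence_set :: "'a::real_normed_vector set \<Rightarrow> bool" where
  "existence_set F \<longleftrightarrow> F \<noteq> {} \<and> (\<forall>x. R_set F x \<noteq> {})"

end

theory Submission
  imports Defs
begin
definition sublin :: "('b::real_vector \<Rightarrow> real) \<Rightarrow> bool" where
  "sublin q \<longleftrightarrow> (\<forall>x y. q (x + y) \<le> q x + q y) \<and> (\<forall>t x. 0 \<le> t \<longrightarrow> q (t *\<^sub>R x) = t * q x)"

lemma sublin_add: "sublin q \<Longrightarrow> q (x + y) \<le> q x + q y"
  unfolding sublin_def by blast

lemma sublin_scale: "sublin q \<Longrightarrow> 0 \<le> t \<Longrightarrow> q (t *\<^sub>R x) = t * q x"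
  unfolding sublin_def by blast

lemma sublin_0: "sublin q \<Longrightarrow> q 0 = 0"
  using sublin_scale[of q 0 0] by simp

lemma sublin_neg: "sublin q \<Longrightarrow> - q (- x) \<le> q x"
proof -
  assume a: "sublin q"
  then have "q (x + - x) \<le> q x + q (-x)" by (rule sublin_add)
  with sublin_0[OF a] show ?thesis by simp
qed

lemma homog_from_le:
  fixes f :: "'b::real_vector \<Rightarrow> real"
  assumes f0: "f 0 = 0" and le: "\<And>t x. 0 < t \<Longrightarrow> f (t *\<^sub>R x) \<le> t * f x"
  and sub: "\<And>x y. f (x+y) \<le> f x + f y"
  shows "sublin f"
proof -
  have "f (t *\<^sub>R x) = t * f x" if "0 \<le> t" for t x
  proof (cases "t = 0")
    case True then show ?thesis using f0 by simp
  next
    case False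
    then have t: "0 < t" using that by simp
    have "f x = f (inverse t *\<^sub>R (t *\<^sub>R x))" using t by simp
    also have "\<dots> \<le> inverse t * f (t *\<^sub>R x)" by (rule le) (simp add: t)
    finally have "f x \<le> f (t *\<^sub>R x) / t" by (simp add: field_simps)
    then have "t * f x \<le> f (t *\<^sub>R x)" using t by (simp add: pos_le_divide_eq mult.commute)
    with le[OF t, of x] show ?thesis by linarith
  qed
  then show ?thesis using sub unfolding sublin_def by blast
qed

lemma sublin_chain_inf:
  assumes C: "C \<noteq> {}" and Cs: "\<And>q. q \<in> C \<Longrightarrow> sublin q" and Cp: "\<And>q x. q \<in> C \<Longrightarrow> q x \<le> p x"
    and ch: "\<And>q1 q2. q1 \<in> C \<Longrightarrow> q2 \<in> C \<Longrightarrow> (\<forall>x. q1 x \<le> q2 x) \<or> (\<forall>x. q2 x \<le> q1 x)"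
    and p: "sublin p"
  shows "sublin (\<lambda>x. INF q\<in>C. q x)" and "\<And>q x. q \<in> C \<Longrightarrow> (INF q\<in>C. q x) \<le> q x"
proof -
  have bdd: "bdd_below ((\<lambda>q. q x) ` C)" for x
  proof (rule bdd_belowI2)
    fix q assume "q \<in> C"
    have "- p (- x) \<le> - q (-x)" using Cp[OF \<open>q \<in> C\<close>] by simp
    also have "\<dots> \<le> q x" using sublin_neg[OF Cs[OF \<open>q \<in> C\<close>]] .
    finally show "- p (- x) \<le> q x" .
  qed
  show low: "(INF q\<in>C. q x) \<le> q x" if "q \<in> C" for q x
    by (rule cINF_lower[OF bdd that])
  let ?u = "\<lambda>x. INF q\<in>C. q x"
  show "sublin ?u"
  proof (rule homog_from_le)
    have "?u 0 = (INF q\<in>C. (0::real))"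
      using Cs sublin_0 by (metis (no_types, lifting) INF_cong)
    then show "?u 0 = 0" using C by simp
  next
    fix t :: real and x assume t: "0 < t"
    have "?u (t *\<^sub>R x) / t \<le> q x" if "q \<in> C" for q
    proof -
      have "?u (t *\<^sub>R x) \<le> q (t *\<^sub>R x)" using low[OF that] .
      also have "\<dots> = t * q x" using sublin_scale[OF Cs[OF that]] t by simp
      finally show ?thesis using t by (simp add: pos_divide_le_eq mult.commute)
    qed
    then have "?u (t *\<^sub>R x) / t \<le> ?u x" by (intro cINF_greatest[OF C]) auto
    then show "?u (t *\<^sub>R x) \<le> t * ?u x" using t by (simp add: pos_divide_le_eq mult.commute)
  next
    fix x y
    have "?u (x + y) \<le> q1 x + q2 y" if "q1 \<in> C" "q2 \<in> C" for q1 q2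
    proof -
      from ch[OF that] show ?thesis
      proof
        assume h: "\<forall>x. q1 x \<le> q2 x"
        have "?u (x + y) \<le> q1 (x + y)" using low[OF that(1)] .
        also have "\<dots> \<le> q1 x + q1 y" using sublin_add[OF Cs[OF that(1)]] .
        finally show ?thesis using h by (meson add_left_mono order_trans)
      next
        assume h: "\<forall>x. q2 x \<le> q1 x"
        have "?u (x + y) \<le> q2 (x + y)" using low[OF that(2)] .
        also have "\<dots> \<le> q2 x + q2 y" using sublin_add[OF Cs[OF that(2)]] .
        finally show ?thesis using h by (meson add_right_mono order_trans)
      qed
    qed
    then have "?u (x + y) - q2 y \<le> ?u x" if "q2 \<in> C" for q2
      using that by (intro cINF_greatest[OF C]) (auto simp: algebra_simps)
    then have "?u (x + y) - ?u x \<le> ?u y"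
      by (intro cINF_greatest[OF C]) (auto simp: algebra_simps)
    then show "?u (x + y) \<le> ?u x + ?u y" by simp
  qed
qed

lemma sublin_shift:
  fixes a :: "'b::real_vector"
  assumes q: "sublin q"
  defines "q' \<equiv> \<lambda>x. INF t\<in>{0::real..}. q (x + t *\<^sub>R a) - t * q a"
  shows "sublin q'" "\<And>x. q' x \<le> q x" "q' (-a) \<le> - q a"
proof -
  have bdd: "bdd_below ((\<lambda>t. q (x + t *\<^sub>R a) - t * q a) ` {0..})" for x
  proof (rule bdd_belowI2)
    fix t :: real assume "t \<in> {0..}"
    then have "t * q a = q (t *\<^sub>R a)" using sublin_scale[OF q] by simp
    also have "\<dots> = q ((x + t *\<^sub>R a) + (- x))" by simp
    also have "\<dots> \<le> q (x + t *\<^sub>R a) + q (-x)" by (rule sublin_add[OF q])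
    finally show "- q (-x) \<le> q (x + t *\<^sub>R a) - t * q a" by simp
  qed
  have low: "q' x \<le> q (x + t *\<^sub>R a) - t * q a" if "0 \<le> t" for x t
    unfolding q'_def by (rule cINF_lower[OF bdd]) (use that in auto)
  show "q' x \<le> q x" for x using low[of 0 x] by simp
  show "q' (-a) \<le> - q a" using low[of 1 "-a"] sublin_0[OF q] by simp
  have ne: "{0::real..} \<noteq> {}" by auto
  have qd: "\<And>x. q' x = (INF t\<in>{0::real..}. q (x + t *\<^sub>R a) - t * q a)" by (simp add: q'_def)
  show "sublin q'"
  proof (rule homog_from_le)
    have "q' 0 = (INF t\<in>{0::real..}. (0::real))"
      unfolding q'_def using sublin_scale[OF q]
      by (intro INF_cong) auto
    then show "q' 0 = 0" by simp
  next
    fix l :: real and x assume l: "0 < l"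
    have "q' (l *\<^sub>R x) / l \<le> q (x + t *\<^sub>R a) - t * q a" if "t \<in> {0..}" for t
    proof -
      have "q' (l *\<^sub>R x) \<le> q (l *\<^sub>R x + (l * t) *\<^sub>R a) - (l * t) * q a"
        using low that l by simp
      also have "l *\<^sub>R x + (l * t) *\<^sub>R a = l *\<^sub>R (x + t *\<^sub>R a)" by (simp add: algebra_simps)
      also have "q (l *\<^sub>R (x + t *\<^sub>R a)) = l * q (x + t *\<^sub>R a)" using sublin_scale[OF q] l by simp
      finally have "q' (l *\<^sub>R x) \<le> l * (q (x + t *\<^sub>R a) - t * q a)" by (simp add: algebra_simps)
      then show ?thesis using l by (simp add: pos_divide_le_eq mult.commute)
    qed
    then have "q' (l *\<^sub>R x) / l \<le> q' x" by (subst qd[of x], intro cINF_greatest[OF ne]) auto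
    then show "q' (l *\<^sub>R x) \<le> l * q' x" using l by (simp add: pos_divide_le_eq mult.commute)
  next
    fix x y
    have "q' (x + y) \<le> (q (x + s *\<^sub>R a) - s * q a) + (q (y + t *\<^sub>R a) - t * q a)"
      if "s \<in> {0..}" "t \<in> {0..}" for s t
    proof -
      have "q' (x + y) \<le> q (x + y + (s + t) *\<^sub>R a) - (s + t) * q a" using low that by simp
      also have "x + y + (s + t) *\<^sub>R a = (x + s *\<^sub>R a) + (y + t *\<^sub>R a)" by (simp add: algebra_simps)
      also have "q \<dots> \<le> q (x + s *\<^sub>R a) + q (y + t *\<^sub>R a)" by (rule sublin_add[OF q])
      finally show ?thesis by (simp add: algebra_simps)
    qed
    then have "q' (x + y) - (q (y + t *\<^sub>R a) - t * q a) \<le> q' x" if "t \<in> {0..}" for t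
      using that by (subst qd[of x], intro cINF_greatest[OF ne]) (auto simp: algebra_simps)
    then have "q' (x + y) - q' x \<le> q' y"
      by (subst qd[of y], intro cINF_greatest[OF ne]) (auto simp: algebra_simps)
    then show "q' (x + y) \<le> q' x + q' y" by simp
  qed
qed


lemma sublin_min_linear:
  assumes g: "sublin g" and min: "\<And>q. sublin q \<Longrightarrow> (\<forall>x. q x \<le> g x) \<Longrightarrow> q = g"
  shows "linear g"
proof -
  have neg: "g (-a) = - g a" for a
  proof -
    let ?q = "\<lambda>x. INF t\<in>{0::real..}. g (x + t *\<^sub>R a) - t * g a"
    have "?q = g" using min sublin_shift(1,2)[OF g, where a=a] by blast
    then have "g (-a) \<le> - g a" using sublin_shift(3)[OF g, where a=a] by metis
    with sublin_neg[OF g, of a] show ?thesis by linarith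
  qed
  show ?thesis
  proof (rule linearI)
    fix x y
    have "g (x+y) \<le> g x + g y" by (rule sublin_add[OF g])
    moreover have "g (-x + -y) \<le> g (-x) + g (-y)" by (rule sublin_add[OF g])
    then have "- g (x + y) \<le> - g x - g y" using neg[of "x+y"] neg[of x] neg[of y] by (simp add: algebra_simps)
    ultimately show "g (x + y) = g x + g y" by linarith
  next
    fix c :: real and x
    show "g (c *\<^sub>R x) = c *\<^sub>R g x"
    proof (cases "0 \<le> c")
      case True then show ?thesis using sublin_scale[OF g] by simp
    next
      case False
      have "g (c *\<^sub>R x) = g (- ((-c) *\<^sub>R x))" by simp
      also have "\<dots> = - g ((-c) *\<^sub>R x)" by (rule neg)
      also have "\<dots> = c * g x" using sublin_scale[OF g, of "-c" x] False by simp
      finally show ?thesis by simp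
    qed
  qed
qed

theorem HB:
  fixes p :: "'b::real_vector \<Rightarrow> real"
  assumes p: "sublin p"
  shows "\<exists>g. linear g \<and> (\<forall>x. g x \<le> p x) \<and> g z = p z"
proof -
  define p' where "p' = (\<lambda>x. INF t\<in>{0::real..}. p (x + t *\<^sub>R z) - t * p z)"
  have p's: "sublin p'" and p'p: "\<And>x. p' x \<le> p x" and p'z: "p' (-z) \<le> - p z"
    using sublin_shift[OF p, where a=z] unfolding p'_def by auto
  define A where "A = {q. sublin q \<and> (\<forall>x. q x \<le> p' x)}"
  define P where "P = (\<lambda>q1 q2::'b\<Rightarrow>real. \<forall>x. q2 x \<le> q1 x)"
  have po: "partial_order_on A (relation_of P A)"
    unfolding partial_order_on_def preorder_on_def refl_on_def trans_def antisym_def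
  proof (intro conjI)
    show "relation_of P A \<subseteq> A \<times> A" unfolding relation_of_def by auto
    show "\<forall>x\<in>A. (x, x) \<in> relation_of P A" unfolding relation_of_def P_def by auto
    show "\<forall>x y z. (x, y) \<in> relation_of P A \<longrightarrow> (y, z) \<in> relation_of P A \<longrightarrow> (x, z) \<in> relation_of P A"
    proof (intro allI impI)
      fix x y z assume "(x, y) \<in> relation_of P A" "(y, z) \<in> relation_of P A"
      then have "\<forall>t. y t \<le> x t" "\<forall>t. z t \<le> y t" "x \<in> A" "z \<in> A" unfolding relation_of_def P_def by auto
      then show "(x, z) \<in> relation_of P A" unfolding relation_of_def P_def by (auto intro: order_trans)
    qed
    show "\<forall>x y. (x, y) \<in> relation_of P A \<longrightarrow> (y, x) \<in> relation_of P A \<longrightarrow> x = y"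
    proof (intro allI impI)
      fix x y assume "(x, y) \<in> relation_of P A" "(y, x) \<in> relation_of P A"
      then have "\<forall>t. y t \<le> x t" "\<forall>t. x t \<le> y t" unfolding relation_of_def P_def by auto
      then show "x = y" by (intro ext order_antisym) auto
    qed
  qed
  have ch: "\<exists>u\<in>A. \<forall>a\<in>C. P a u" if "C \<in> Chains (relation_of P A)" for C
  proof (cases "C = {}")
    case True then show ?thesis using p's unfolding A_def by auto
  next
    case False
    have CA: "C \<subseteq> A" using that unfolding Chains_def relation_of_def by auto
    have chn: "\<And>q1 q2. q1\<in>C \<Longrightarrow> q2\<in>C \<Longrightarrow> (\<forall>x. q1 x \<le> q2 x) \<or> (\<forall>x. q2 x \<le> q1 x)"
      using that unfolding Chains_def relation_of_def P_def by blast
    have Cs: "\<And>q. q \<in> C \<Longrightarrow> sublin q" and Cp: "\<And>q x. q \<in> C \<Longrightarrow> q x \<le> p' x"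
      using CA unfolding A_def by auto
    have I1: "sublin (\<lambda>x. INF q\<in>C. q x)"
      apply (rule sublin_chain_inf(1)[where C=C and p=p'])
      using False Cs Cp chn p's by auto
    have I2: "\<And>q x. q \<in> C \<Longrightarrow> (INF q\<in>C. q x) \<le> q x"
      apply (rule sublin_chain_inf(2)[where C=C and p=p'])
      using False Cs Cp chn p's by auto
    note I = I1 I2
    obtain q0 where q0: "q0 \<in> C" using False by blast
    have "(INF q\<in>C. q x) \<le> p' x" for x using I(2)[OF q0, of x] Cp[OF q0, of x] by linarith
    then have "(\<lambda>x. INF q\<in>C. q x) \<in> A" using I(1) unfolding A_def by auto
    moreover have "\<forall>a\<in>C. P a (\<lambda>x. INF q\<in>C. q x)" using I(2) unfolding P_def by auto
    ultimately show ?thesis by blast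
  qed
  from predicate_Zorn[OF po ch] obtain g where gA: "g \<in> A" and gmax: "\<forall>a\<in>A. P g a \<longrightarrow> a = g"
    by blast
  have gs: "sublin g" and gp: "\<And>x. g x \<le> p' x" using gA unfolding A_def by auto
  have lin: "linear g"
  proof (rule sublin_min_linear[OF gs])
    fix q assume "sublin q" "\<forall>x. q x \<le> g x"
    then have "q \<in> A" "P g q" unfolding A_def P_def using gp by (auto intro: order_trans)
    then show "q = g" using gmax by blast
  qed
  have "g z \<le> p z" using gp[of z] p'p[of z] by linarith
  moreover have "g (-z) = - g z" using lin by (simp add: linear_neg)
  then have "p z \<le> g z" using gp[of "-z"] p'z by linarith
  ultimately have "g z = p z" by linarith
  moreover have "\<forall>x. g x \<le> p x" using gp p'p order_trans by blast
  ultimately show ?thesis using lin by blast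
qed

lemma infdist_geI:
  assumes "K \<noteq> {}" "\<And>a. a \<in> K \<Longrightarrow> c \<le> dist x a"
  shows "c \<le> infdist x K"
  using assms by (simp add: infdist_notempty cINF_greatest)

lemma cone_functional:
  fixes K :: "'a::real_normed_vector set"
  assumes K0: "0 \<in> K" and Kadd: "\<And>a b. a\<in>K \<Longrightarrow> b\<in>K \<Longrightarrow> a+b \<in> K"
    and Kscale: "\<And>t a. 0<t \<Longrightarrow> a\<in>K \<Longrightarrow> t *\<^sub>R a \<in> K"
  shows "\<exists>f::'a \<Rightarrow>\<^sub>L real. (\<forall>k\<in>K. blinfun_apply f k \<le> 0) \<and> blinfun_apply f z = infdist z K
           \<and> (\<forall>y. blinfun_apply f y \<le> norm y)"
proof -
  have Kne: "K \<noteq> {}" using K0 by blast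
  let ?p = "\<lambda>y. infdist y K"
  have sp: "sublin ?p"
  proof (rule homog_from_le)
    show "?p 0 = 0" using K0 by simp
  next
    fix t :: real and x assume t: "0 < t"
    have "?p (t *\<^sub>R x) / t \<le> dist x a" if "a \<in> K" for a
    proof -
      have "?p (t *\<^sub>R x) \<le> dist (t *\<^sub>R x) (t *\<^sub>R a)" using Kscale[OF t that] by (rule infdist_le)
      also have "\<dots> = t * dist x a" using t by (simp add: dist_norm flip: scaleR_diff_right)
      finally show ?thesis using t by (simp add: pos_divide_le_eq mult.commute)
    qed
    then have "?p (t *\<^sub>R x) / t \<le> ?p x" by (rule infdist_geI[OF Kne])
    then show "?p (t *\<^sub>R x) \<le> t * ?p x" using t by (simp add: pos_divide_le_eq mult.commute)
  next
    fix x y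
    have "?p (x + y) - dist y b \<le> dist x a" if "a \<in> K" "b \<in> K" for a b
    proof -
      have "?p (x + y) \<le> dist (x + y) (a + b)" using Kadd[OF that] by (rule infdist_le)
      also have "\<dots> \<le> dist x a + dist y b"
        by (simp add: dist_norm) (metis add_diff_add norm_triangle_ineq)
      finally show ?thesis by simp
    qed
    then have "?p (x + y) - dist y b \<le> ?p x" if "b \<in> K" for b
      using that by (intro infdist_geI[OF Kne]) auto
    then have "?p (x + y) - ?p x \<le> ?p y"
      by (intro infdist_geI[OF Kne]) (auto simp: algebra_simps)
    then show "?p (x + y) \<le> ?p x + ?p y" by simp
  qed
  obtain g where g: "linear g" "\<And>x. g x \<le> ?p x" "g z = ?p z"
    using HB[OF sp, of z] by blast
  have gn: "g y \<le> norm y" for y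
  proof -
    have "g y \<le> ?p y" by (rule g(2))
    also have "\<dots> \<le> dist y 0" using K0 by (rule infdist_le)
    finally show ?thesis by simp
  qed
  have gabs: "norm (g y) \<le> norm y * 1" for y
  proof -
    have "g (-y) = - g y" using g(1) by (simp add: linear_neg)
    then show ?thesis using gn[of y] gn[of "-y"] by auto
  qed
  have bl: "bounded_linear g"
    using g(1) gabs by (intro bounded_linear_intro[where K=1]) (auto simp: linear_add linear_scale)
  have "g k \<le> 0" if "k \<in> K" for k using g(2)[of k] that by simp
  then show ?thesis
    using bl g(3) gn by (intro exI[of _ "Blinfun g"]) (simp add: bounded_linear_Blinfun_apply)
qed


lemma weak_cluster:
  fixes d :: "nat \<Rightarrow> 'a::real_normed_vector"
  assumes refl: "reflexive_space TYPE('a)" and bd: "\<And>n. norm (d n) \<le> R"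
  shows "\<exists>e. \<forall>f::'a\<Rightarrow>\<^sub>L real. \<forall>B. (\<forall>\<^sub>F n in sequentially. blinfun_apply f (d n) \<le> B)
            \<longrightarrow> blinfun_apply f e \<le> B"
proof -
  define S where "S = (\<lambda>f::'a\<Rightarrow>\<^sub>L real. {B. \<forall>\<^sub>F n in sequentially. blinfun_apply f (d n) \<le> B})"
  define p where "p = (\<lambda>f. Inf (S f))"
  have fb: "\<bar>blinfun_apply f (d n)\<bar> \<le> norm f * R" for f n
  proof -
    have "\<bar>blinfun_apply f (d n)\<bar> \<le> norm f * norm (d n)" using norm_blinfun[of f "d n"] by simp
    also have "\<dots> \<le> norm f * R" by (rule mult_left_mono[OF bd norm_ge_zero])
    finally show ?thesis .
  qed
  have inS: "norm f * R \<in> S f" for f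
    unfolding S_def using fb by (auto intro!: always_eventually) (meson abs_le_D1)
  have Sne: "S f \<noteq> {}" for f using inS by blast
  have Slow: "- (norm f * R) \<le> B" if "B \<in> S f" for f B
  proof -
    from that obtain N where "\<And>n. n \<ge> N \<Longrightarrow> blinfun_apply f (d n) \<le> B"
      unfolding S_def eventually_sequentially by auto
    then have "blinfun_apply f (d N) \<le> B" by simp
    moreover have "- (norm f * R) \<le> blinfun_apply f (d N)" using fb[of f N] by linarith
    ultimately show ?thesis by linarith
  qed
  have bdd: "bdd_below (S f)" for f using Slow by (meson bdd_belowI)
  have plow: "p f \<le> B" if "B \<in> S f" for f B
    unfolding p_def by (rule cInf_lower[OF that bdd])
  have pge: "B \<le> p f" if "\<And>B'. B' \<in> S f \<Longrightarrow> B \<le> B'" for f B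
    unfolding p_def by (rule cInf_greatest[OF Sne]) (use that in auto)
  have sp: "sublin p"
  proof (rule homog_from_le)
    have "S 0 = {0..}" unfolding S_def by auto
    then show "p 0 = 0" unfolding p_def by simp
  next
    fix t :: real and f assume t: "0 < t"
    have "p (t *\<^sub>R f) / t \<le> B" if "B \<in> S f" for B
    proof -
      have "t * B \<in> S (t *\<^sub>R f)" using that t unfolding S_def
        by (auto elim!: eventually_mono simp: blinfun.scaleR_left)
      then have "p (t *\<^sub>R f) \<le> t * B" by (rule plow)
      then show ?thesis using t by (simp add: pos_divide_le_eq mult.commute)
    qed
    then have "p (t *\<^sub>R f) / t \<le> p f" by (rule pge)
    then show "p (t *\<^sub>R f) \<le> t * p f" using t by (simp add: pos_divide_le_eq mult.commute)
  next
    fix f g :: "'a \<Rightarrow>\<^sub>L real"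
    have "p (f + g) - B2 \<le> B1" if "B1 \<in> S f" "B2 \<in> S g" for B1 B2
    proof -
      have "B1 + B2 \<in> S (f + g)" using that unfolding S_def
        by (auto elim: eventually_elim2 simp: blinfun.add_left)
      then have "p (f + g) \<le> B1 + B2" by (rule plow)
      then show ?thesis by simp
    qed
    then have "p (f + g) - B2 \<le> p f" if "B2 \<in> S g" for B2 using that by (intro pge) auto
    then have "p (f + g) - p f \<le> p g" by (intro pge) (auto simp: algebra_simps)
    then show "p (f + g) \<le> p f + p g" by simp
  qed
  obtain g where g: "linear g" "\<And>f. g f \<le> p f"
    using HB[OF sp] by blast
  have gn: "g f \<le> norm f * R" for f using g(2)[of f] plow[OF inS[of f]] by linarith
  have gabs: "norm (g f) \<le> norm f * R" for f
  proof -
    have "g (-f) = - g f" using g(1) by (simp add: linear_neg)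
    then show ?thesis using gn[of f] gn[of "-f"] by auto
  qed
  have bl: "bounded_linear g"
    using g(1) gabs by (intro bounded_linear_intro[where K=R]) (auto simp: linear_add linear_scale)
  obtain e where e: "\<And>f. blinfun_apply (Blinfun g) f = blinfun_apply f e"
    using refl unfolding reflexive_space_def by blast
  have "blinfun_apply f e \<le> B" if "\<forall>\<^sub>F n in sequentially. blinfun_apply f (d n) \<le> B" for f :: "'a \<Rightarrow>\<^sub>L real" and B :: real
  proof -
    have "blinfun_apply f e = g f" using e[of f] bl by (simp add: bounded_linear_Blinfun_apply)
    also have "\<dots> \<le> p f" by (rule g(2))
    also have "\<dots> \<le> B" using that unfolding S_def by (intro plow) (simp add: S_def)
    finally show ?thesis .
  qed
  then show ?thesis by blast
qed


theorem corollary14: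
  fixes F :: "'a::banach set" and v :: 'a
  assumes "reflexive_space TYPE('a)"
    and "convex F"
    and "existence_set F"
    and "v \<in> F"
  shows "existence_set
           (closure (\<Union>t\<in>{0<..}. (\<lambda>y. (1 - t) *\<^sub>R v + t *\<^sub>R y) ` F))"
proof -
  note refl = assms(1) and cvx = assms(2) and ex = assms(3) and vF = assms(4)
  define \<phi> where "\<phi> = (\<lambda>t::real. \<lambda>y. (1 - t) *\<^sub>R v + t *\<^sub>R y)"
  define U where "U = (\<Union>t\<in>{0<..}. \<phi> t ` F)"
  have phi_v: "\<phi> t y - v = t *\<^sub>R (y - v)" for t y
    unfolding \<phi>_def by (simp add: algebra_simps)
  have memU: "c \<in> U \<longleftrightarrow> (\<exists>t>0. \<exists>y\<in>F. c = \<phi> t y)" for c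
    unfolding U_def by auto
  have vin: "v \<in> \<phi> t ` F" for t
    using vF unfolding \<phi>_def by (intro image_eqI[of _ _ v]) (auto simp: algebra_simps)
  have vU: "v \<in> U" using vin[of 1] unfolding U_def by auto
  have mono: "\<phi> s y \<in> \<phi> t ` F" if "0 < s" "s \<le> t" "y \<in> F" for s t y
  proof -
    have t: "0 < t" using that by simp
    define y' where "y' = (s / t) *\<^sub>R y + (1 - s / t) *\<^sub>R v"
    have "y' \<in> F" unfolding y'_def
      using cvx that vF t by (intro convexD) (auto simp: divide_le_eq_1)
    moreover have "\<phi> s y = \<phi> t y'"
    proof -
      have "\<phi> t y' = (1 - t) *\<^sub>R v + (t * (s / t)) *\<^sub>R y + (t * (1 - s / t)) *\<^sub>R v"
        unfolding \<phi>_def y'_def by (simp add: algebra_simps)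
      also have "\<dots> = (1 - t) *\<^sub>R v + s *\<^sub>R y + (t - s) *\<^sub>R v"
        using t by (simp add: algebra_simps)
      also have "\<dots> = \<phi> s y" unfolding \<phi>_def by (simp add: algebra_simps)
      finally show ?thesis by simp
    qed
    ultimately show ?thesis by blast
  qed
  have exist: "\<exists>e\<in>\<phi> t ` F. \<forall>c\<in>\<phi> t ` F. norm (e - c) \<le> norm (x - c)" if t: "0 < t" for t x
  proof -
    define x' where "x' = v + inverse t *\<^sub>R (x - v)"
    have xx: "\<phi> t x' = x" unfolding \<phi>_def x'_def using t by (simp add: algebra_simps)
    obtain d' where d': "d' \<in> F" "\<And>c. c \<in> F \<Longrightarrow> norm (d' - c) \<le> norm (x' - c)"
      using ex unfolding existence_set_def R_set_def by blast
    have dist_phi: "norm (\<phi> t a - \<phi> t b) = t * norm (a - b)" for a b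
    proof -
      have "\<phi> t a - \<phi> t b = t *\<^sub>R (a - b)" unfolding \<phi>_def by (simp add: algebra_simps)
      then show ?thesis using t by simp
    qed
    have "norm (\<phi> t d' - c) \<le> norm (x - c)" if "c \<in> \<phi> t ` F" for c
    proof -
      from that obtain c' where c': "c' \<in> F" "c = \<phi> t c'" by blast
      have "norm (\<phi> t d' - c) = t * norm (d' - c')" using c' dist_phi by simp
      also have "\<dots> \<le> t * norm (x' - c')" using d'(2)[OF c'(1)] t by simp
      also have "\<dots> = norm (x - c)" using c' dist_phi[of x' c'] xx by simp
      finally show ?thesis .
    qed
    then show ?thesis using d'(1) by blast
  qed
  define K where "K = (\<lambda>c. c - v) ` U"
  have memK: "k \<in> K \<longleftrightarrow> (\<exists>t>0. \<exists>y\<in>F. k = t *\<^sub>R (y - v))" for k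
  proof
    assume "k \<in> K"
    then obtain c where c: "c \<in> U" "k = c - v" unfolding K_def by blast
    then obtain t y where "t > 0" "y \<in> F" "c = \<phi> t y" using memU by blast
    then show "\<exists>t>0. \<exists>y\<in>F. k = t *\<^sub>R (y - v)" using c(2) phi_v by blast
  next
    assume "\<exists>t>0. \<exists>y\<in>F. k = t *\<^sub>R (y - v)"
    then obtain t y where ty: "t > 0" "y \<in> F" "k = t *\<^sub>R (y - v)" by blast
    then have "\<phi> t y \<in> U" using memU by blast
    moreover have "k = \<phi> t y - v" using phi_v ty(3) by simp
    ultimately show "k \<in> K" unfolding K_def by blast
  qed
  have K0: "0 \<in> K" unfolding K_def using vU by force
  have Kscale: "t *\<^sub>R a \<in> K" if "0 < t" "a \<in> K" for t a
  proof -
    from that(2) obtain s y where "s > 0" "y \<in> F" "a = s *\<^sub>R (y - v)" unfolding memK by blast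
    then show ?thesis unfolding memK using that(1) by (intro exI[of _ "t * s"]) auto
  qed
  have Kadd: "a + b \<in> K" if "a \<in> K" "b \<in> K" for a b
  proof -
    from that obtain s y r w where sy: "s > 0" "y \<in> F" "a = s *\<^sub>R (y - v)"
      and rw: "r > 0" "w \<in> F" "b = r *\<^sub>R (w - v)" unfolding memK by blast
    define z where "z = (s / (s + r)) *\<^sub>R y + (r / (s + r)) *\<^sub>R w"
    have "z \<in> F" unfolding z_def using cvx sy rw
      by (intro convexD) (auto simp: add_divide_distrib[symmetric])
    moreover have "a + b = (s + r) *\<^sub>R (z - v)"
    proof -
      have "(s + r) *\<^sub>R z = s *\<^sub>R y + r *\<^sub>R w" using sy rw unfolding z_def
        by (simp add: scaleR_add_right)
      moreover have "a + b = (s *\<^sub>R y + r *\<^sub>R w) - (s + r) *\<^sub>R v"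
        unfolding sy(3) rw(3) by (simp add: algebra_simps)
      ultimately show ?thesis by (simp add: scaleR_diff_right)
    qed
    ultimately show ?thesis unfolding memK using sy rw by (intro exI[of _ "s + r"]) auto
  qed
  have Cne: "closure U \<noteq> {}" using vU closure_subset by blast
  have "R_set (closure U) x \<noteq> {}" for x
  proof -
    have "\<forall>n. \<exists>e. e \<in> \<phi> (real n + 1) ` F \<and> (\<forall>c\<in>\<phi> (real n + 1) ` F. norm (e - c) \<le> norm (x - c))"
    proof
      fix n :: nat
      have "0 < real n + 1" by simp
      from exist[OF this, of x]
      show "\<exists>e. e \<in> \<phi> (real n + 1) ` F \<and> (\<forall>c\<in>\<phi> (real n + 1) ` F. norm (e - c) \<le> norm (x - c))"
        by blast
    qed
    then obtain d where d: "\<And>n. d n \<in> \<phi> (real n + 1) ` F"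
      "\<And>n c. c \<in> \<phi> (real n + 1) ` F \<Longrightarrow> norm (d n - c) \<le> norm (x - c)"
      by metis
    have dU: "d n \<in> U" for n using d(1)[of n] unfolding U_def
      by (auto intro: add_pos_nonneg)
    have bd: "norm (d n) \<le> norm v + norm (x - v)" for n
    proof -
      have "norm (d n - v) \<le> norm (x - v)" using d(2)[OF vin] .
      then show ?thesis using norm_triangle_sub[of "d n" v] by linarith
    qed
    obtain e where e: "\<And>(f::'a \<Rightarrow>\<^sub>L real) (B::real). (\<forall>\<^sub>F n in sequentially. blinfun_apply f (d n) \<le> B) \<Longrightarrow> blinfun_apply f e \<le> B"
      using weak_cluster[where d=d, OF refl bd] by blast
    have ev: "\<forall>\<^sub>F n in sequentially. c \<in> \<phi> (real n + 1) ` F" if "c \<in> U" for c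
    proof -
      from that obtain s y where sy: "s > 0" "y \<in> F" "c = \<phi> s y" unfolding memU by blast
      have "c \<in> \<phi> (real n + 1) ` F" if "n \<ge> nat \<lceil>s\<rceil>" for n
      proof -
        have "s \<le> real n + 1" using that by linarith
        then show ?thesis using mono[OF sy(1) _ sy(2)] sy(3) by blast
      qed
      then show ?thesis unfolding eventually_sequentially by blast
    qed
    have claim1: "norm (e - c) \<le> norm (x - c)" if "c \<in> U" for c
    proof -
      obtain f :: "'a \<Rightarrow>\<^sub>L real" where f: "blinfun_apply f (e - c) = infdist (e - c) {0}"
        "\<And>y. blinfun_apply f y \<le> norm y"
        using cone_functional[of "{0}" "e - c"] by auto
      have "\<forall>\<^sub>F n in sequentially. blinfun_apply f (d n) \<le> blinfun_apply f c + norm (x - c)"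
        using ev[OF that]
      proof (rule eventually_mono)
        fix n assume "c \<in> \<phi> (real n + 1) ` F"
        then have "norm (d n - c) \<le> norm (x - c)" by (rule d(2))
        moreover have "blinfun_apply f (d n - c) \<le> norm (d n - c)" by (rule f(2))
        ultimately show "blinfun_apply f (d n) \<le> blinfun_apply f c + norm (x - c)"
          by (simp add: blinfun.diff_right)
      qed
      then have "blinfun_apply f e \<le> blinfun_apply f c + norm (x - c)" by (rule e)
      then show ?thesis using f(1) by (simp add: blinfun.diff_right)
    qed
    have claim1': "norm (e - c) \<le> norm (x - c)" if "c \<in> closure U" for c
    proof -
      have "closed {c. norm (e - c) \<le> norm (x - c)}"
        by (intro closed_Collect_le continuous_intros)
      moreover have "U \<subseteq> {c. norm (e - c) \<le> norm (x - c)}" using claim1 by blast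
      ultimately have "closure U \<subseteq> {c. norm (e - c) \<le> norm (x - c)}" by (rule closure_minimal[rotated])
      then show ?thesis using that by blast
    qed
    have claim2: "e \<in> closure U"
    proof (rule ccontr)
      assume nin: "e \<notin> closure U"
      have Une: "U \<noteq> {}" using vU by blast
      have "infdist e U \<noteq> 0" using nin in_closure_iff_infdist_zero[OF Une] by blast
      then have pos: "0 < infdist e U" using infdist_nonneg[of e U] by linarith
      have Kne: "K \<noteq> {}" using K0 by blast
      have "infdist (e - v) K = (INF k\<in>K. dist (e - v) k)" by (rule infdist_notempty[OF Kne])
      also have "\<dots> = (INF c\<in>U. dist (e - v) (c - v))"
        unfolding K_def by (simp add: image_comp o_def)
      also have "\<dots> = infdist e U" unfolding infdist_notempty[OF Une]
        by (simp add: dist_norm)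
      finally have eqd: "infdist (e - v) K = infdist e U" .
      obtain f :: "'a \<Rightarrow>\<^sub>L real" where f: "\<And>k. k \<in> K \<Longrightarrow> blinfun_apply f k \<le> 0"
        "blinfun_apply f (e - v) = infdist (e - v) K"
        using cone_functional[OF K0 Kadd Kscale, of "e - v"] by auto
      have "\<forall>\<^sub>F n in sequentially. blinfun_apply f (d n) \<le> blinfun_apply f v"
      proof (rule always_eventually, rule allI)
        fix n
        have "d n - v \<in> K" unfolding K_def using dU by blast
        then have "blinfun_apply f (d n - v) \<le> 0" by (rule f(1))
        then show "blinfun_apply f (d n) \<le> blinfun_apply f v" by (simp add: blinfun.diff_right)
      qed
      then have "blinfun_apply f e \<le> blinfun_apply f v" by (rule e)
      then have "blinfun_apply f (e - v) \<le> 0" by (simp add: blinfun.diff_right)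
      then show False using f(2) eqd pos by linarith
    qed
    have "e \<in> R_set (closure U) x" unfolding R_set_def using claim2 claim1' by blast
    then show ?thesis by blast
  qed
  then have "existence_set (closure U)" unfolding existence_set_def using Cne by blast
  then show ?thesis unfolding U_def \<phi>_def .
qed

end
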